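(* Let $k\geq 2$ be an integer and let $G$ be a properly edge-coloured graph on $n$ vertices. If $\hom(C_{2k},G)>64^{2k}k^{3k}n\Delta(G)^k$, then $G$ contains a rainbow cycle of length $2k$.
   Context: $\hom(C_{2k},G)$ is the number of graph homomorphisms from the cycle $C_{2k}$ to $G$, i.e. tuples $(x_1,\dots,x_{2k})$ of vertices with $x_ix_{i+1}\in E(G)$ for all $i$ (indices mod $2k$). $\Delta(G)$ is the maximum degree. An edge-colouring is proper if edges sharing a vertex get different colours; a subgraph is rainbow if all its edges have distinct colours. *)

theory Defs
  imports Complex_Main "HOL-Library.FuncSet"
begin

definition simple_graph :: "'a set \<Rightarrow> 'a set set \<Rightarrow> bool" where
  "simple_graph V E \<longleftrightarrow> finite V \<and> (\<forall>e\<in>E. e \<subseteq> V \<and> card e = 2)"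

definition degree :: "'a set set \<Rightarrow> 'a \<Rightarrow> nat" where
  "degree E v = card {e\<in>E. v \<in> e}"

definition max_degree :: "'a set \<Rightarrow> 'a set set \<Rightarrow> nat" where
  "max_degree V E = Max (insert 0 (degree E ` V))"

definition proper_edge_colouring :: "'a set set \<Rightarrow> ('a set \<Rightarrow> 'c) \<Rightarrow> bool" where
  "proper_edge_colouring E c \<longleftrightarrow>
     (\<forall>e\<in>E. \<forall>f\<in>E. e \<noteq> f \<and> e \<inter> f \<noteq> {} \<longrightarrow> c e \<noteq> c f)"

definition cycle_homs :: "nat \<Rightarrow> 'a set \<Rightarrow> 'a set set \<Rightarrow> (nat \<Rightarrow> 'a) set" where
  "cycle_homs m V E = {x \<in> {0..<m} \<rightarrow>\<^sub>E V. \<forall>i<m. {x i, x ((i + 1) mod m)} \<in> E}"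

definition hom_cycle :: "nat \<Rightarrow> 'a set \<Rightarrow> 'a set set \<Rightarrow> nat" where
  "hom_cycle m V E = card (cycle_homs m V E)"

definition is_cycle :: "'a set \<Rightarrow> 'a set set \<Rightarrow> nat \<Rightarrow> (nat \<Rightarrow> 'a) \<Rightarrow> bool" where
  "is_cycle V E m x \<longleftrightarrow> inj_on x {0..<m} \<and> (\<forall>i<m. x i \<in> V) \<and>
     (\<forall>i<m. {x i, x ((i + 1) mod m)} \<in> E)"

definition has_rainbow_cycle :: "'a set \<Rightarrow> 'a set set \<Rightarrow> ('a set \<Rightarrow> 'c) \<Rightarrow> nat \<Rightarrow> bool" where
  "has_rainbow_cycle V E c m \<longleftrightarrow> (\<exists>x. is_cycle V E m x \<and>
     inj_on (\<lambda>i. c {x i, x ((i + 1) mod m)}) {0..<m})"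

end

theory Submission
  imports Defs
begin

lemma mv2: "(\<Sum>s\<in>A. \<Sum>u\<in>B. \<Sum>b\<in>C. f s u b) = (\<Sum>u\<in>B. \<Sum>b\<in>C. \<Sum>s\<in>A. f s u b)"
  by (subst sum.swap, rule sum.cong[OF refl], rule sum.swap)
lemma mv3: "(\<Sum>s\<in>A. \<Sum>u\<in>B. \<Sum>b\<in>C. \<Sum>y\<in>D. f s u b y) = (\<Sum>u\<in>B. \<Sum>b\<in>C. \<Sum>y\<in>D. \<Sum>s\<in>A. f s u b y)"
  by (subst sum.swap, rule sum.cong[OF refl], rule mv2)
lemma mv4: "(\<Sum>s\<in>A. \<Sum>u\<in>B. \<Sum>b\<in>C. \<Sum>y\<in>D. \<Sum>z\<in>F. f s u b y z) = (\<Sum>u\<in>B. \<Sum>b\<in>C. \<Sum>y\<in>D. \<Sum>z\<in>F. \<Sum>s\<in>A. f s u b y z)"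
  by (subst sum.swap, rule sum.cong[OF refl], rule mv3)
lemma mv4_2: "(\<Sum>s\<in>A. \<Sum>t\<in>A'. \<Sum>u\<in>B. \<Sum>b\<in>C. \<Sum>y\<in>D. \<Sum>z\<in>F. f s t u b y z) =
   (\<Sum>u\<in>B. \<Sum>b\<in>C. \<Sum>y\<in>D. \<Sum>z\<in>F. \<Sum>s\<in>A. \<Sum>t\<in>A'. f s t u b y z)"
  by (rule trans[OF sum.cong[OF refl mv4] mv4])

lemma CS_sum:
  fixes a :: "'a \<Rightarrow> real"
  shows "(\<Sum>i\<in>I. a i * b i)\<^sup>2 \<le> (\<Sum>i\<in>I. (a i)\<^sup>2) * (\<Sum>i\<in>I. (b i)\<^sup>2)"
proof (cases "(\<Sum>i\<in>I. (b i)\<^sup>2) > 0")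
  case False
  then consider "\<And>i. i\<in>I \<Longrightarrow> b i = 0" | "infinite I"
    by (metis (mono_tags, lifting) sum_pos2 zero_le_power2 zero_less_power2)
  thus ?thesis
    by fastforce
next
  case True
  define r where "r \<equiv> (\<Sum>i\<in>I. a i * b i) / (\<Sum>i\<in>I. (b i)\<^sup>2)"
  have "0 \<le> (\<Sum>i\<in>I. (a i - r * b i)\<^sup>2)"
    by (simp add: sum_nonneg)
  also have "... = (\<Sum>i\<in>I. (a i)\<^sup>2) - 2 * r * (\<Sum>i\<in>I. a i * b i) + r\<^sup>2 * (\<Sum>i\<in>I. (b i)\<^sup>2)"
    by (simp add: algebra_simps power2_eq_square sum_distrib_left flip: sum.distrib)
  also have "\<dots> = (\<Sum>i\<in>I. (a i)\<^sup>2) - ((\<Sum>i\<in>I. a i * b i))\<^sup>2 / (\<Sum>i\<in>I. (b i)\<^sup>2)"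
    by (simp add: r_def power2_eq_square)
  finally have "0 \<le> (\<Sum>i\<in>I. (a i)\<^sup>2) - ((\<Sum>i\<in>I. a i * b i))\<^sup>2 / (\<Sum>i\<in>I. (b i)\<^sup>2)" .
  hence "((\<Sum>i\<in>I. a i * b i))\<^sup>2 / (\<Sum>i\<in>I. (b i)\<^sup>2) \<le> (\<Sum>i\<in>I. (a i)\<^sup>2)"
    by (simp add: le_diff_eq)
  thus "((\<Sum>i\<in>I. a i * b i))\<^sup>2 \<le> (\<Sum>i\<in>I. (a i)\<^sup>2) * (\<Sum>i\<in>I. (b i)\<^sup>2)"
    by (simp add: pos_divide_le_eq True)
qed

lemma CS3:
  fixes f g :: "'k \<Rightarrow> 'a \<Rightarrow> 'a \<Rightarrow> real"
  shows "(\<Sum>k\<in>K. \<Sum>s\<in>V. \<Sum>t\<in>V. f k s t * g k s t)\<^sup>2 \<le>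
     (\<Sum>k\<in>K. \<Sum>s\<in>V. \<Sum>t\<in>V. (f k s t)\<^sup>2) * (\<Sum>k\<in>K. \<Sum>s\<in>V. \<Sum>t\<in>V. (g k s t)\<^sup>2)"
proof -
  have e: "\<And>h :: 'k \<Rightarrow> 'a \<Rightarrow> 'a \<Rightarrow> real. (\<Sum>k\<in>K. \<Sum>s\<in>V. \<Sum>t\<in>V. h k s t) =
      (\<Sum>p\<in>K \<times> V \<times> V. h (fst p) (fst (snd p)) (snd (snd p)))"
    by (simp add: sum.cartesian_product split_def)
  show ?thesis unfolding e by (rule CS_sum)
qed

definition TT :: "'a set \<Rightarrow> (nat \<Rightarrow> 'a \<Rightarrow> 'a \<Rightarrow> real) \<Rightarrow> 'k set \<Rightarrow> ('k \<Rightarrow> 'a \<Rightarrow> 'a \<Rightarrow> real)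
   \<Rightarrow> nat \<Rightarrow> nat \<Rightarrow> real" where
  "TT V Wf K e a b = (\<Sum>k\<in>K. \<Sum>u\<in>V. \<Sum>\<beta>\<in>V. \<Sum>y\<in>V. \<Sum>y'\<in>V.
      e k u \<beta> * e k y y' * (Wf a \<beta> y * Wf b y' u))"

lemma prod_sums: "(c::real) * ((\<Sum>s\<in>A. P s) * (\<Sum>t\<in>B. Q t)) = (\<Sum>s\<in>A. \<Sum>t\<in>B. c * (P s * Q t))"
  unfolding sum_product by (simp add: sum_distrib_left)

lemma TT_cs:
  fixes Wf :: "nat \<Rightarrow> 'a \<Rightarrow> 'a \<Rightarrow> real" and e :: "'k \<Rightarrow> 'a \<Rightarrow> 'a \<Rightarrow> real"
  assumes esym: "\<And>k x y. e k x y = e k y x"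
    and Wsym: "\<And>a x y. Wf a x y = Wf a y x"
    and Wadd: "\<And>a b x y. Wf (a+b) x y = (\<Sum>w\<in>V. Wf a x w * Wf b w y)"
  shows "(TT V Wf K e (a1+a2) (b1+b2))\<^sup>2 \<le> TT V Wf K e (2*a1) (2*b2) * TT V Wf K e (2*a2) (2*b1)"
proof -
  define X where "X k s t = (\<Sum>u\<in>V. \<Sum>\<beta>\<in>V. e k u \<beta> * Wf a1 \<beta> s * Wf b2 t u)" for k s t
  define Y where "Y k s t = (\<Sum>y\<in>V. \<Sum>y'\<in>V. e k y y' * Wf a2 s y * Wf b1 y' t)" for k s t
  have W2: "Wf (2*a) x y = (\<Sum>w\<in>V. Wf a w x * Wf a w y)" for a x y
    using Wadd[of a a] by (simp add: mult_2 Wsym[of a x])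
  have W2b: "Wf (2*a) x y = (\<Sum>w\<in>V. Wf a x w * Wf a y w)" for a x y
    using Wadd[of a a] by (simp add: mult_2 Wsym[of a _ y])
  have 1: "TT V Wf K e (a1+a2) (b1+b2) = (\<Sum>k\<in>K. \<Sum>s\<in>V. \<Sum>t\<in>V. X k s t * Y k s t)"
  proof -
    have "TT V Wf K e (a1+a2) (b1+b2) = (\<Sum>k\<in>K. \<Sum>u\<in>V. \<Sum>\<beta>\<in>V. \<Sum>y\<in>V. \<Sum>y'\<in>V. \<Sum>s\<in>V. \<Sum>t\<in>V.
        e k u \<beta> * e k y y' * ((Wf a1 \<beta> s * Wf a2 s y) * (Wf b1 y' t * Wf b2 t u)))"
      unfolding TT_def Wadd prod_sums by simp
    also have "\<dots> = (\<Sum>k\<in>K. \<Sum>s\<in>V. \<Sum>t\<in>V. \<Sum>u\<in>V. \<Sum>\<beta>\<in>V. \<Sum>y\<in>V. \<Sum>y'\<in>V.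
        e k u \<beta> * e k y y' * ((Wf a1 \<beta> s * Wf a2 s y) * (Wf b1 y' t * Wf b2 t u)))"
      by (rule sum.cong[OF refl], rule mv4_2[symmetric])
    also have "\<dots> = (\<Sum>k\<in>K. \<Sum>s\<in>V. \<Sum>t\<in>V. \<Sum>u\<in>V. \<Sum>y\<in>V. \<Sum>\<beta>\<in>V. \<Sum>y'\<in>V.
        e k u \<beta> * e k y y' * ((Wf a1 \<beta> s * Wf a2 s y) * (Wf b1 y' t * Wf b2 t u)))"
      by (rule sum.cong[OF refl], rule sum.cong[OF refl], rule sum.cong[OF refl], rule sum.cong[OF refl], rule sum.swap)
    also have "\<dots> = (\<Sum>k\<in>K. \<Sum>s\<in>V. \<Sum>t\<in>V. X k s t * Y k s t)"
      unfolding X_def Y_def sum_product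
      by (intro sum.cong refl) (simp add: mult_ac)
    finally show ?thesis .
  qed
  have 2: "(\<Sum>k\<in>K. \<Sum>s\<in>V. \<Sum>t\<in>V. (X k s t)\<^sup>2) = TT V Wf K e (2*a1) (2*b2)"
  proof -
    have leaf: "e k u \<beta> * e k u' \<beta>' * (Wf (2*a1) \<beta> \<beta>' * Wf (2*b2) u u') =
        e k u \<beta> * e k \<beta>' u' * (Wf (2*a1) \<beta> \<beta>' * Wf (2*b2) u' u)" for k u \<beta> u' \<beta>'
      using esym[of k u' \<beta>'] Wsym[of "2*b2" u u'] by simp
    have "(\<Sum>k\<in>K. \<Sum>s\<in>V. \<Sum>t\<in>V. (X k s t)\<^sup>2) = (\<Sum>k\<in>K. \<Sum>s\<in>V. \<Sum>t\<in>V.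
       \<Sum>u\<in>V. \<Sum>u'\<in>V. \<Sum>\<beta>\<in>V. \<Sum>\<beta>'\<in>V. e k u \<beta> * e k u' \<beta>' * ((Wf a1 \<beta> s * Wf a1 \<beta>' s) * (Wf b2 t u * Wf b2 t u')))"
      unfolding X_def power2_eq_square sum_product
      by (intro sum.cong refl) (simp add: mult_ac)
    also have "\<dots> = (\<Sum>k\<in>K. \<Sum>u\<in>V. \<Sum>u'\<in>V. \<Sum>\<beta>\<in>V. \<Sum>\<beta>'\<in>V. \<Sum>s\<in>V. \<Sum>t\<in>V.
        e k u \<beta> * e k u' \<beta>' * ((Wf a1 \<beta> s * Wf a1 \<beta>' s) * (Wf b2 t u * Wf b2 t u')))"
      by (rule sum.cong[OF refl], rule mv4_2)
    also have "\<dots> = (\<Sum>k\<in>K. \<Sum>u\<in>V. \<Sum>u'\<in>V. \<Sum>\<beta>\<in>V. \<Sum>\<beta>'\<in>V.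
        e k u \<beta> * e k u' \<beta>' * (Wf (2*a1) \<beta> \<beta>' * Wf (2*b2) u u'))"
      unfolding W2b[of a1] W2[of b2] prod_sums by simp
    also have "\<dots> = (\<Sum>k\<in>K. \<Sum>u\<in>V. \<Sum>\<beta>\<in>V. \<Sum>\<beta>'\<in>V. \<Sum>u'\<in>V.
        e k u \<beta> * e k u' \<beta>' * (Wf (2*a1) \<beta> \<beta>' * Wf (2*b2) u u'))"
      by (rule sum.cong[OF refl], rule sum.cong[OF refl], rule mv2)
    also have "\<dots> = TT V Wf K e (2*a1) (2*b2)"
      unfolding TT_def by (intro sum.cong refl leaf)
    finally show ?thesis .
  qed
  have 3: "(\<Sum>k\<in>K. \<Sum>s\<in>V. \<Sum>t\<in>V. (Y k s t)\<^sup>2) = TT V Wf K e (2*a2) (2*b1)"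
  proof -
    have leaf: "e k y y' * e k z z' * (Wf (2*a2) y z * Wf (2*b1) y' z') =
        e k y' y * e k z z' * (Wf (2*a2) y z * Wf (2*b1) z' y')" for k y y' z z'
      using esym[of k y y'] Wsym[of "2*b1" y' z'] by simp
    have "(\<Sum>k\<in>K. \<Sum>s\<in>V. \<Sum>t\<in>V. (Y k s t)\<^sup>2) = (\<Sum>k\<in>K. \<Sum>s\<in>V. \<Sum>t\<in>V.
       \<Sum>y\<in>V. \<Sum>z\<in>V. \<Sum>y'\<in>V. \<Sum>z'\<in>V. e k y y' * e k z z' * ((Wf a2 s y * Wf a2 s z) * (Wf b1 y' t * Wf b1 z' t)))"
      unfolding Y_def power2_eq_square sum_product
      by (intro sum.cong refl) (simp add: mult_ac)
    also have "\<dots> = (\<Sum>k\<in>K. \<Sum>y\<in>V. \<Sum>z\<in>V. \<Sum>y'\<in>V. \<Sum>z'\<in>V. \<Sum>s\<in>V. \<Sum>t\<in>V.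
        e k y y' * e k z z' * ((Wf a2 s y * Wf a2 s z) * (Wf b1 y' t * Wf b1 z' t)))"
      by (rule sum.cong[OF refl], rule mv4_2)
    also have "\<dots> = (\<Sum>k\<in>K. \<Sum>y\<in>V. \<Sum>z\<in>V. \<Sum>y'\<in>V. \<Sum>z'\<in>V.
        e k y y' * e k z z' * (Wf (2*a2) y z * Wf (2*b1) y' z'))"
      unfolding W2[of a2] W2b[of b1] prod_sums by simp
    also have "\<dots> = (\<Sum>k\<in>K. \<Sum>y'\<in>V. \<Sum>y\<in>V. \<Sum>z\<in>V. \<Sum>z'\<in>V.
        e k y y' * e k z z' * (Wf (2*a2) y z * Wf (2*b1) y' z'))"
      by (rule sum.cong[OF refl], rule mv2[symmetric])
    also have "\<dots> = TT V Wf K e (2*a2) (2*b1)"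
      unfolding TT_def by (intro sum.cong refl leaf)
    finally show ?thesis .
  qed
  show ?thesis unfolding 1 2[symmetric] 3[symmetric] by (rule CS3)
qed


lemma TT_sym:
  fixes Wf :: "nat \<Rightarrow> 'a \<Rightarrow> 'a \<Rightarrow> real" and e :: "'k \<Rightarrow> 'a \<Rightarrow> 'a \<Rightarrow> real"
  assumes esym: "\<And>k x y. e k x y = e k y x"
    and Wsym: "\<And>a x y. Wf a x y = Wf a y x"
  shows "TT V Wf K e a b = TT V Wf K e b a"
proof -
  have leaf: "e k u \<beta> * e k y y' * (Wf a \<beta> y * Wf b y' u) = e k \<beta> u * e k y' y * (Wf b u y' * Wf a y \<beta>)"
    for k u \<beta> y y'
    using esym[of k u \<beta>] esym[of k y y'] Wsym[of a \<beta> y] Wsym[of b y' u] by (simp add: mult_ac)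
  have "TT V Wf K e a b = (\<Sum>k\<in>K. \<Sum>u\<in>V. \<Sum>\<beta>\<in>V. \<Sum>y\<in>V. \<Sum>y'\<in>V.
      e k \<beta> u * e k y' y * (Wf b u y' * Wf a y \<beta>))"
    unfolding TT_def by (intro sum.cong refl leaf)
  also have "\<dots> = (\<Sum>k\<in>K. \<Sum>\<beta>\<in>V. \<Sum>u\<in>V. \<Sum>y\<in>V. \<Sum>y'\<in>V.
      e k \<beta> u * e k y' y * (Wf b u y' * Wf a y \<beta>))"
    by (rule sum.cong[OF refl], rule sum.swap)
  also have "\<dots> = (\<Sum>k\<in>K. \<Sum>\<beta>\<in>V. \<Sum>u\<in>V. \<Sum>y'\<in>V. \<Sum>y\<in>V.
      e k \<beta> u * e k y' y * (Wf b u y' * Wf a y \<beta>))"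
    by (rule sum.cong[OF refl], rule sum.cong[OF refl], rule sum.cong[OF refl], rule sum.swap)
  also have "\<dots> = TT V Wf K e b a" unfolding TT_def ..
  finally show ?thesis .
qed

lemma max_arg:
  fixes T :: "nat \<Rightarrow> nat \<Rightarrow> real"
  assumes nonneg: "\<And>a b. T a b \<ge> 0"
    and cs: "\<And>a1 a2 b1 b2. (T (a1+a2) (b1+b2))\<^sup>2 \<le> T (2*a1) (2*b2) * T (2*a2) (2*b1)"
    and sym: "\<And>a b. T a b = T b a"
    and rs: "2*r \<le> s"
    and d: "2*r \<le> d" "d \<le> 2*s - 2*r"
  shows "T d (2*s - d) \<le> T (2*r) (2*s - 2*r)"
proof -
  define S where "S = {2*r..2*s-2*r}"
  define f where "f x = T x (2*s - x)" for x
  define B where "B = T (2*r) (2*s - 2*r)"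
  define M where "M = Max (f ` S)"
  have finS: "finite (f ` S)" by (simp add: S_def)
  have neS: "f ` S \<noteq> {}" using rs by (auto simp: S_def)
  have fM: "x \<in> S \<Longrightarrow> f x \<le> M" for x unfolding M_def using finS by auto
  obtain d0 where d0: "d0 \<in> S" "f d0 = M" unfolding M_def using Max_in[OF finS neS] by auto
  have B0: "B \<ge> 0" using nonneg by (simp add: B_def)
  have M0: "M \<ge> 0" using d0 nonneg by (auto simp: f_def)
  have key: "M\<^sup>2 \<le> B * M"
  proof (cases "d0 \<le> s")
    case True
    have e1: "d0 = r + (d0 - r)" and e2: "2*s - d0 = (s - d0 + r) + (s - r)"
      using d0 True rs by (auto simp: S_def)
    have "M\<^sup>2 = (T (r + (d0 - r)) ((s - d0 + r) + (s - r)))\<^sup>2"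
      using d0 e1 e2 by (simp add: f_def)
    also have "\<dots> \<le> T (2*r) (2*(s-r)) * T (2*(d0-r)) (2*(s - d0 + r))" by (rule cs)
    also have "T (2*r) (2*(s-r)) = B" by (simp add: B_def right_diff_distrib')
    also have "T (2*(d0-r)) (2*(s - d0 + r)) = f (2*(d0-r))"
      using True d0 rs by (auto simp: f_def S_def intro!: arg_cong[where f="T _"])
    also have "f (2*(d0-r)) \<le> M" using True d0 rs by (intro fM) (auto simp: S_def)
    finally show ?thesis using B0 by (simp add: mult_left_mono)
  next
    case False
    have e1: "d0 = (d0 - s + r) + (s - r)" and e2: "2*s - d0 = r + (2*s - d0 - r)"
      using d0 False rs by (auto simp: S_def)
    have "M\<^sup>2 = (T ((d0 - s + r) + (s - r)) (r + (2*s - d0 - r)))\<^sup>2"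
      using d0 e1 e2 by (simp add: f_def)
    also have "\<dots> \<le> T (2*(d0 - s + r)) (2*(2*s - d0 - r)) * T (2*(s-r)) (2*r)" by (rule cs)
    also have "T (2*(d0 - s + r)) (2*(2*s - d0 - r)) * T (2*(s-r)) (2*r) = f (2*(d0 - s + r)) * B"
    proof -
      have "T (2*(s-r)) (2*r) = B" by (simp add: B_def right_diff_distrib' sym)
      moreover have "T (2*(d0 - s + r)) (2*(2*s - d0 - r)) = f (2*(d0 - s + r))"
        using False d0 rs by (auto simp: f_def S_def intro!: arg_cong[where f="T _"])
      ultimately show ?thesis by simp
    qed
    also have "\<dots> \<le> M * B"
      by (rule mult_right_mono[OF fM B0]) (use False d0 rs in \<open>auto simp: S_def\<close>)
    finally show ?thesis by (simp add: mult.commute)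
  qed
  have "M \<le> B"
  proof (cases "M = 0")
    case True thus ?thesis using B0 by simp
  next
    case False
    hence "M > 0" using M0 by simp
    thus ?thesis using key by (simp add: power2_eq_square)
  qed
  moreover have "f d \<le> M" using d by (intro fM) (auto simp: S_def)
  ultimately show ?thesis by (simp add: f_def B_def)
qed

lemma logconv_induct:
  fixes M :: "nat \<Rightarrow> real"
  assumes nonneg: "\<And>j. M j \<ge> 0" and M0: "M 0 \<le> n"
    and lc: "\<And>j. (M (Suc j))\<^sup>2 \<le> M j * M (Suc (Suc j))"
  shows "M j ^ (j+1) \<le> n * M (j+1) ^ j"
proof (induction j)
  case 0 thus ?case using M0 by simp
next
  case (Suc j)
  let ?a = "M j" and ?b = "M (Suc j)" and ?c = "M (Suc (Suc j))"
  have ex: "j + (j+2) = 2*(j+1)" by simp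
  have "?b ^ j * ?b ^ (j+2) = (?b\<^sup>2) ^ (j+1)" unfolding power_add[symmetric] ex power_mult ..
  also have "\<dots> \<le> (?a * ?c) ^ (j+1)" by (rule power_mono[OF lc]) (simp add: nonneg)
  also have "\<dots> = ?a ^ (j+1) * ?c ^ (j+1)" by (simp add: power_mult_distrib)
  also have "\<dots> \<le> (n * ?b ^ j) * ?c ^ (j+1)"
    using Suc.IH by (intro mult_right_mono) (auto simp: nonneg)
  finally have *: "?b ^ j * ?b ^ (j+2) \<le> ?b ^ j * (n * ?c ^ (j+1))" by (simp add: mult_ac)
  show ?case
  proof (cases "?b = 0")
    case True
    have "n \<ge> 0" using M0 nonneg[of 0] by simp
    thus ?thesis using True nonneg by simp
  next
    case False
    hence "?b ^ j > 0" using nonneg[of "Suc j"] by simp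
    hence "?b ^ (j+2) \<le> n * ?c ^ (j+1)" using * by (simp add: mult_le_cancel_left_pos)
    thus ?thesis by simp
  qed
qed

lemma final_numeric:
  fixes L D A B n :: real and k :: nat
  assumes "k \<ge> 1" "L > 0" "D \<ge> 0" "A \<ge> 0" "B \<ge> 0" "n \<ge> 0"
    and h1: "A ^ k \<le> n * B ^ (k-1)"
    and h2: "B > L ^ k * n * D ^ k"
  shows "L * D * A \<le> B"
proof (rule ccontr)
  assume "\<not> L * D * A \<le> B"
  hence lt: "B < L * D * A" by simp
  obtain k' where k: "k = Suc k'" using assms(1) by (cases k) auto
  have "L ^ k * n * D ^ k \<ge> 0" using assms by simp
  hence B0: "B > 0" using h2 by linarith
  have "B ^ k < (L * D * A) ^ k" using lt B0 assms k by (intro power_strict_mono) auto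
  also have "\<dots> = (L*D) ^ k * A ^ k" by (simp add: power_mult_distrib)
  also have "\<dots> \<le> (L*D) ^ k * (n * B ^ (k-1))" using h1 assms by (intro mult_left_mono) auto
  finally have "B * B ^ k' < (L^k * n * D^k) * B ^ k'"
    unfolding k by (simp add: power_mult_distrib mult_ac)
  hence "B < L^k * n * D^k" using B0 by (simp add: mult_less_cancel_right)
  thus False using h2 by simp
qed


definition Lp :: "nat \<Rightarrow> (nat \<Rightarrow> 'a) \<Rightarrow> (nat \<Rightarrow> 'a)" where "Lp a z = restrict z {0..a}"
definition Rp :: "nat \<Rightarrow> nat \<Rightarrow> (nat \<Rightarrow> 'a) \<Rightarrow> (nat \<Rightarrow> 'a)" where
  "Rp a b z = restrict (\<lambda>i. z (a+i)) {0..b}"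
definition Gl :: "nat \<Rightarrow> nat \<Rightarrow> (nat \<Rightarrow> 'a) \<Rightarrow> (nat \<Rightarrow> 'a) \<Rightarrow> (nat \<Rightarrow> 'a)" where
  "Gl a b x y = restrict (\<lambda>i. if i \<le> a then x i else y (i - a)) {0..a+b}"

lemma card_fibres:
  assumes "finite A" "finite T" "f ` A \<subseteq> T"
  shows "card A = (\<Sum>t\<in>T. card {a\<in>A. f a = t})"
proof -
  have "A = (\<Union>t\<in>T. {a\<in>A. f a = t})" using assms(3) by auto
  hence "card A = card (\<Union>t\<in>T. {a\<in>A. f a = t})" by simp
  also have "\<dots> = (\<Sum>t\<in>T. card {a\<in>A. f a = t})"
    by (rule card_UN_disjoint) (use assms in auto)
  finally show ?thesis .
qed

locale sg =
  fixes V :: "'a set" and E :: "'a set set"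
  assumes sg: "simple_graph V E"
begin

lemma finV: "finite V" using sg by (simp add: simple_graph_def)
lemma edge_sub: "e \<in> E \<Longrightarrow> e \<subseteq> V" using sg by (simp add: simple_graph_def)
lemma edge_card: "e \<in> E \<Longrightarrow> card e = 2" using sg by (simp add: simple_graph_def)
lemma edge_ne: "{x,y} \<in> E \<Longrightarrow> x \<noteq> y" using edge_card by fastforce
lemma edge_V: "{x,y} \<in> E \<Longrightarrow> x \<in> V \<and> y \<in> V" using edge_sub by blast

definition walkset :: "nat \<Rightarrow> (nat \<Rightarrow> 'a) set" where
  "walkset a = {z \<in> {0..a} \<rightarrow>\<^sub>E V. \<forall>i<a. {z i, z (Suc i)} \<in> E}"
definition wk :: "nat \<Rightarrow> 'a \<Rightarrow> 'a \<Rightarrow> (nat \<Rightarrow> 'a) set" where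
  "wk a u v = {z \<in> walkset a. z 0 = u \<and> z a = v}"
definition W :: "nat \<Rightarrow> 'a \<Rightarrow> 'a \<Rightarrow> nat" where "W a u v = card (wk a u v)"

lemma fin_walkset: "finite (walkset a)"
proof -
  have "finite ({0..a} \<rightarrow>\<^sub>E V)" using finV by (simp add: finite_PiE)
  thus ?thesis unfolding walkset_def by simp
qed

lemma fin_wk: "finite {z \<in> wk a u v. P z}"
  using fin_walkset unfolding wk_def by simp

lemma Lp_walk: "z \<in> walkset (a+b) \<Longrightarrow> Lp a z \<in> walkset a"
  unfolding walkset_def Lp_def by (auto simp: PiE_iff)

lemma Rp_walk: "z \<in> walkset (a+b) \<Longrightarrow> Rp a b z \<in> walkset b"
  unfolding walkset_def Rp_def by (auto simp: PiE_iff)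

lemma Gl_walk: assumes "x \<in> walkset a" "y \<in> walkset b" "x a = y 0"
  shows "Gl a b x y \<in> walkset (a+b)"
proof -
  have "Gl a b x y \<in> {0..a+b} \<rightarrow>\<^sub>E V"
    using assms unfolding walkset_def Gl_def by (auto simp: PiE_iff)
  moreover have "{Gl a b x y i, Gl a b x y (Suc i)} \<in> E" if "i < a+b" for i
  proof (cases "i < a")
    case True
    thus ?thesis using assms that unfolding walkset_def Gl_def by auto
  next
    case False
    hence "Suc i - a = Suc (i - a)" by simp
    moreover have "i - a < b" using that False by simp
    ultimately show ?thesis using assms that False unfolding walkset_def Gl_def
      by (cases "i = a") auto
  qed
  ultimately show ?thesis unfolding walkset_def by auto
qed

lemma Gl_Lp_Rp: "z \<in> {0..a+b} \<rightarrow>\<^sub>E V \<Longrightarrow> Gl a b (Lp a z) (Rp a b z) = z"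
  unfolding Gl_def Lp_def Rp_def by (rule ext) (auto simp: PiE_iff extensional_def)

lemma Lp_Gl: "x \<in> {0..a} \<rightarrow>\<^sub>E V \<Longrightarrow> Lp a (Gl a b x y) = x"
  unfolding Gl_def Lp_def by (rule ext) (auto simp: PiE_iff extensional_def)

lemma Rp_Gl: "y \<in> {0..b} \<rightarrow>\<^sub>E V \<Longrightarrow> x a = y 0 \<Longrightarrow> Rp a b (Gl a b x y) = y"
  unfolding Gl_def Rp_def by (rule ext) (auto simp: PiE_iff extensional_def)

lemma split_bij:
  "bij_betw (\<lambda>z. (Lp a z, Rp a b z)) {z \<in> wk (a+b) u v. z a = w \<and> P (Lp a z) \<and> Q (Rp a b z)}
     ({x \<in> wk a u w. P x} \<times> {y \<in> wk b w v. Q y})"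
proof (rule bij_betw_byWitness[where f' = "\<lambda>(x,y). Gl a b x y"])
  show "\<forall>z\<in>{z \<in> wk (a+b) u v. z a = w \<and> P (Lp a z) \<and> Q (Rp a b z)}.
      (\<lambda>(x,y). Gl a b x y) (Lp a z, Rp a b z) = z"
    using Gl_Lp_Rp unfolding wk_def walkset_def by auto
  show "\<forall>p\<in>{x \<in> wk a u w. P x} \<times> {y \<in> wk b w v. Q y}.
      (\<lambda>z. (Lp a z, Rp a b z)) ((\<lambda>(x,y). Gl a b x y) p) = p"
    using Lp_Gl Rp_Gl unfolding wk_def walkset_def by auto
  show "(\<lambda>z. (Lp a z, Rp a b z)) ` {z \<in> wk (a+b) u v. z a = w \<and> P (Lp a z) \<and> Q (Rp a b z)}
      \<subseteq> {x \<in> wk a u w. P x} \<times> {y \<in> wk b w v. Q y}"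
    using Lp_walk Rp_walk unfolding wk_def by (auto simp: Lp_def Rp_def)
  show "(\<lambda>(x,y). Gl a b x y) ` ({x \<in> wk a u w. P x} \<times> {y \<in> wk b w v. Q y})
      \<subseteq> {z \<in> wk (a+b) u v. z a = w \<and> P (Lp a z) \<and> Q (Rp a b z)}"
  proof (rule image_subsetI)
    fix p assume "p \<in> {x \<in> wk a u w. P x} \<times> {y \<in> wk b w v. Q y}"
    then obtain x y where p: "p = (x,y)" and x: "x \<in> wk a u w" "P x" and y: "y \<in> wk b w v" "Q y"
      by auto
    have xw: "x \<in> walkset a" "x 0 = u" "x a = w" using x unfolding wk_def by auto
    have yw: "y \<in> walkset b" "y 0 = w" "y b = v" using y unfolding wk_def by auto
    have xe: "x \<in> {0..a} \<rightarrow>\<^sub>E V" and ye: "y \<in> {0..b} \<rightarrow>\<^sub>E V"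
      using xw yw unfolding walkset_def by auto
    have g: "Gl a b x y \<in> walkset (a+b)" using Gl_walk xw yw by simp
    have "Gl a b x y 0 = u" using xw by (simp add: Gl_def)
    moreover have "Gl a b x y (a+b) = v" using xw yw by (auto simp: Gl_def)
    moreover have "Gl a b x y a = w" using xw by (simp add: Gl_def)
    ultimately show "(\<lambda>(x,y). Gl a b x y) p \<in> {z \<in> wk (a+b) u v. z a = w \<and> P (Lp a z) \<and> Q (Rp a b z)}"
      using p g x(2) y(2) Lp_Gl[OF xe] Rp_Gl[OF ye] xw yw unfolding wk_def by simp
  qed
qed

lemma split_card:
  "card {z \<in> wk (a+b) u v. z a = w \<and> P (Lp a z) \<and> Q (Rp a b z)}
     = card {x \<in> wk a u w. P x} * card {y \<in> wk b w v. Q y}"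
  using bij_betw_same_card[OF split_bij] by (simp add: card_cartesian_product)

lemma W_add: "W (a+b) u v = (\<Sum>w\<in>V. W a u w * W b w v)"
proof -
  have "W (a+b) u v = (\<Sum>w\<in>V. card {z \<in> wk (a+b) u v. z a = w})"
    unfolding W_def
    by (rule card_fibres) (use fin_wk[where P="\<lambda>_. True"] finV in \<open>auto simp: wk_def walkset_def\<close>)
  also have "\<dots> = (\<Sum>w\<in>V. W a u w * W b w v)"
  proof (rule sum.cong[OF refl])
    fix w
    show "card {z \<in> wk (a+b) u v. z a = w} = W a u w * W b w v"
      using split_card[of a b u v w "\<lambda>_. True" "\<lambda>_. True"] by (simp add: W_def)
  qed
  finally show ?thesis .
qed

lemma wk_PiE: "z \<in> wk a u v \<Longrightarrow> z \<in> {0..a} \<rightarrow>\<^sub>E V"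
  unfolding wk_def walkset_def by auto

lemma W0: assumes "u \<in> V" shows "W 0 u v = (if u = v then 1 else 0)"
proof (cases "u = v")
  case True
  have "wk 0 u v = {restrict (\<lambda>_. u) {0..0}}"
  proof
    show "wk 0 u v \<subseteq> {restrict (\<lambda>_. u) {0..0}}"
    proof
      fix z assume z: "z \<in> wk 0 u v"
      have "z = restrict (\<lambda>_. u) {0..0}"
        by (rule PiE_ext[OF wk_PiE[OF z]]) (use z assms in \<open>auto simp: wk_def\<close>)
      thus "z \<in> {restrict (\<lambda>_. u) {0..0}}" by simp
    qed
    show "{restrict (\<lambda>_. u) {0..0}} \<subseteq> wk 0 u v"
      using assms True by (auto simp: wk_def walkset_def)
  qed
  thus ?thesis using True by (simp add: W_def)
next
  case False
  hence "wk 0 u v = {}" by (auto simp: wk_def)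
  thus ?thesis using False by (simp add: W_def)
qed

lemma W1: assumes "u \<in> V" "v \<in> V" shows "W 1 u v = (if {u,v} \<in> E then 1 else 0)"
proof (cases "{u,v} \<in> E")
  case True
  let ?f = "restrict (\<lambda>i. if i = 0 then u else v) {0..1}"
  have "wk 1 u v = {?f}"
  proof
    show "wk 1 u v \<subseteq> {?f}"
    proof
      fix z assume z: "z \<in> wk 1 u v"
      have "\<forall>i\<in>{0..1}. z i = ?f i"
      proof
        fix i :: nat assume "i \<in> {0..1}"
        hence "i = 0 \<or> i = 1" by auto
        thus "z i = ?f i" using z by (auto simp: wk_def)
      qed
      hence "z = ?f" using PiE_ext[OF wk_PiE[OF z], of ?f] assms by auto
      thus "z \<in> {?f}" by simp
    qed
    show "{?f} \<subseteq> wk 1 u v"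
      using assms True by (auto simp: wk_def walkset_def)
  qed
  thus ?thesis using True by (simp add: W_def)
next
  case False
  hence "wk 1 u v = {}" by (auto simp: wk_def walkset_def)
  thus ?thesis using False by (simp add: W_def)
qed

definition rv :: "nat \<Rightarrow> (nat \<Rightarrow> 'a) \<Rightarrow> (nat \<Rightarrow> 'a)" where
  "rv a z = restrict (\<lambda>i. z (a - i)) {0..a}"

lemma rv_wk: assumes "z \<in> wk a u v" shows "rv a z \<in> wk a v u"
proof -
  have z: "z \<in> {0..a} \<rightarrow>\<^sub>E V" "\<forall>i<a. {z i, z (Suc i)} \<in> E" "z 0 = u" "z a = v"
    using assms by (auto simp: wk_def walkset_def)
  have "{rv a z i, rv a z (Suc i)} \<in> E" if "i < a" for i
  proof -
    have "a - i = Suc (a - Suc i)" using that by simp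
    hence "{rv a z i, rv a z (Suc i)} = {z (Suc (a - Suc i)), z (a - Suc i)}"
      using that by (simp add: rv_def)
    also have "\<dots> \<in> E" using z(2) that by (simp add: insert_commute)
    finally show ?thesis .
  qed
  thus ?thesis using z by (auto simp: wk_def walkset_def rv_def PiE_iff)
qed

lemma rv_rv: "z \<in> {0..a} \<rightarrow>\<^sub>E V \<Longrightarrow> rv a (rv a z) = z"
  unfolding rv_def by (rule ext) (auto simp: PiE_iff extensional_def)

lemma W_sym: "W a u v = W a v u"
proof -
  have "bij_betw (rv a) (wk a u v) (wk a v u)"
    by (rule bij_betw_byWitness[where f'="rv a"]) (auto simp: rv_wk rv_rv wk_PiE)
  thus ?thesis unfolding W_def by (rule bij_betw_same_card)
qed

lemma W2: assumes "u \<in> V" shows "W 2 u u = degree E u"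
proof -
  have "W 2 u u = W (1+1) u u" by (simp add: numeral_2_eq_2)
  also have "\<dots> = (\<Sum>w\<in>V. W 1 u w * W 1 w u)" by (rule W_add)
  also have "\<dots> = (\<Sum>w\<in>V. if {u,w} \<in> E then 1 else 0)"
  proof (rule sum.cong[OF refl])
    fix w assume w: "w \<in> V"
    show "W 1 u w * W 1 w u = (if {u,w} \<in> E then 1 else 0)"
      using W1[OF assms w] W1[OF w assms] by (simp add: insert_commute)
  qed
  also have "\<dots> = card {w\<in>V. {u,w} \<in> E}"
    using finV by (simp add: sum.If_cases Int_def)
  also have "\<dots> = card {e\<in>E. u \<in> e}"
  proof (rule bij_betw_same_card)
    show "bij_betw (\<lambda>w. {u,w}) {w\<in>V. {u,w} \<in> E} {e\<in>E. u \<in> e}"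
    proof (rule bij_betwI')
      fix x y assume "x \<in> {w\<in>V. {u,w} \<in> E}" "y \<in> {w\<in>V. {u,w} \<in> E}"
      thus "({u,x} = {u,y}) = (x = y)" using edge_ne by (auto simp: doubleton_eq_iff)
    next
      fix x assume "x \<in> {w\<in>V. {u,w} \<in> E}" thus "{u,x} \<in> {e\<in>E. u \<in> e}" by auto
    next
      fix e assume e: "e \<in> {e\<in>E. u \<in> e}"
      have "card e = 2" using e edge_card by auto
      then obtain x y where xy: "e = {x,y}" "x \<noteq> y" by (auto simp: card_2_iff)
      show "\<exists>w\<in>{w\<in>V. {u,w} \<in> E}. e = {u,w}"
      proof (cases "u = x")
        case True thus ?thesis using e xy edge_V by auto
      next
        case False hence "u = y" using e xy by auto
        thus ?thesis using e xy edge_V by (auto simp: insert_commute)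
      qed
    qed
  qed
  finally show ?thesis by (simp add: degree_def)
qed

definition ex :: "nat \<Rightarrow> (nat \<Rightarrow> 'a) \<Rightarrow> (nat \<Rightarrow> 'a)" where
  "ex m x = restrict (\<lambda>i. if i = m then x 0 else x i) {0..m}"

lemma cyc_bij: assumes "m \<ge> 1"
  shows "bij_betw (ex m) {x \<in> cycle_homs m V E. P x}
           {z \<in> walkset m. z m = z 0 \<and> P (restrict z {0..<m})}"
proof (rule bij_betw_byWitness[where f'="\<lambda>z. restrict z {0..<m}"])
  have rex: "restrict (ex m x) {0..<m} = x" if "x \<in> {0..<m} \<rightarrow>\<^sub>E V" for x
    using that unfolding ex_def by (intro ext) (auto simp: PiE_iff extensional_def)
  show "\<forall>x\<in>{x \<in> cycle_homs m V E. P x}. restrict (ex m x) {0..<m} = x"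
    using rex by (auto simp: cycle_homs_def)
  show "\<forall>z\<in>{z \<in> walkset m. z m = z 0 \<and> P (restrict z {0..<m})}. ex m (restrict z {0..<m}) = z"
    using assms unfolding ex_def walkset_def by (auto intro!: ext simp: PiE_iff extensional_def)
  show "ex m ` {x \<in> cycle_homs m V E. P x} \<subseteq> {z \<in> walkset m. z m = z 0 \<and> P (restrict z {0..<m})}"
  proof (rule image_subsetI)
    fix x assume x: "x \<in> {x \<in> cycle_homs m V E. P x}"
    hence xp: "x \<in> {0..<m} \<rightarrow>\<^sub>E V" "\<forall>i<m. {x i, x ((i + 1) mod m)} \<in> E" "P x"
      by (auto simp: cycle_homs_def)
    have "ex m x \<in> {0..m} \<rightarrow>\<^sub>E V" using xp assms by (auto simp: ex_def PiE_iff)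
    moreover have "{ex m x i, ex m x (Suc i)} \<in> E" if "i < m" for i
    proof (cases "Suc i = m")
      case True
      thus ?thesis using xp(2) that by (auto simp: ex_def)
    next
      case False
      thus ?thesis using xp(2) that by (auto simp: ex_def)
    qed
    ultimately show "ex m x \<in> {z \<in> walkset m. z m = z 0 \<and> P (restrict z {0..<m})}"
      using assms xp rex by (auto simp: walkset_def ex_def)
  qed
  show "(\<lambda>z. restrict z {0..<m}) ` {z \<in> walkset m. z m = z 0 \<and> P (restrict z {0..<m})}
      \<subseteq> {x \<in> cycle_homs m V E. P x}"
  proof (rule image_subsetI)
    fix z assume z: "z \<in> {z \<in> walkset m. z m = z 0 \<and> P (restrict z {0..<m})}"
    hence zp: "z \<in> {0..m} \<rightarrow>\<^sub>E V" "\<forall>i<m. {z i, z (Suc i)} \<in> E" "z m = z 0"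
      by (auto simp: walkset_def)
    have "{restrict z {0..<m} i, restrict z {0..<m} ((i + 1) mod m)} \<in> E" if "i < m" for i
    proof (cases "Suc i = m")
      case True
      thus ?thesis using zp that assms by auto
    next
      case False
      hence "(i+1) mod m = Suc i" using that by simp
      thus ?thesis using zp that False by auto
    qed
    thus "restrict z {0..<m} \<in> {x \<in> cycle_homs m V E. P x}"
      using z zp by (auto simp: cycle_homs_def PiE_iff)
  qed
qed

lemma cyc_card: assumes "m \<ge> 1"
  shows "card {x \<in> cycle_homs m V E. P x} = (\<Sum>u\<in>V. card {z \<in> wk m u u. P (restrict z {0..<m})})"
proof -
  have "card {x \<in> cycle_homs m V E. P x} = card {z \<in> walkset m. z m = z 0 \<and> P (restrict z {0..<m})}"
    by (rule bij_betw_same_card[OF cyc_bij[OF assms]])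
  also have "\<dots> = (\<Sum>u\<in>V. card {z \<in> {z \<in> walkset m. z m = z 0 \<and> P (restrict z {0..<m})}. z 0 = u})"
    by (rule card_fibres) (use fin_walkset finV in \<open>auto simp: walkset_def intro: rev_finite_subset[OF fin_walkset]\<close>)
  also have "\<dots> = (\<Sum>u\<in>V. card {z \<in> wk m u u. P (restrict z {0..<m})})"
    by (intro sum.cong refl arg_cong[where f=card]) (auto simp: wk_def)
  finally show ?thesis .
qed

lemma vert_count: assumes "0 < d" "d < m"
  shows "card {x \<in> cycle_homs m V E. x 0 = x d} = (\<Sum>u\<in>V. W d u u * W (m-d) u u)"
proof -
  have "card {x \<in> cycle_homs m V E. x 0 = x d} =
     (\<Sum>u\<in>V. card {z \<in> wk m u u. restrict z {0..<m} 0 = restrict z {0..<m} d})"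
    by (rule cyc_card) (use assms in simp)
  also have "\<dots> = (\<Sum>u\<in>V. W d u u * W (m-d) u u)"
  proof (rule sum.cong[OF refl])
    fix u
    have m: "d + (m-d) = m" using assms by simp
    have "{z \<in> wk m u u. restrict z {0..<m} 0 = restrict z {0..<m} d} =
      {z \<in> wk (d+(m-d)) u u. z d = u \<and> (\<lambda>_. True) (Lp d z) \<and> (\<lambda>_. True) (Rp d (m-d) z)}"
      unfolding m using assms by (auto simp: wk_def)
    thus "card {z \<in> wk m u u. restrict z {0..<m} 0 = restrict z {0..<m} d} = W d u u * W (m-d) u u"
      using split_card[of d "m-d" u u u "\<lambda>_. True" "\<lambda>_. True"] by (simp add: W_def)
  qed
  finally show ?thesis .
qed

lemma first_step: "card {x \<in> wk (Suc a) u v. x 1 = b} = W 1 u b * W a b v"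
  using split_card[of 1 a u v b "\<lambda>_. True" "\<lambda>_. True"] by (simp add: W_def)

lemma col_count4: assumes "1 \<le> d" "d+1 < m"
  shows "card {z \<in> wk m u u. z 1 = b \<and> z d = y \<and> z (d+1) = y'} =
    W 1 u b * W (d-1) b y * (W 1 y y' * W (m-d-1) y' u)"
proof -
  have m: "d + (m-d) = m" using assms by simp
  have S: "{z \<in> wk m u u. z 1 = b \<and> z d = y \<and> z (d+1) = y'} =
      {z \<in> wk (d+(m-d)) u u. z d = y \<and> (\<lambda>x. x 1 = b) (Lp d z) \<and> (\<lambda>x. x 1 = y') (Rp d (m-d) z)}"
  proof -
    have "\<And>z. Lp d z 1 = z 1" using assms by (simp add: Lp_def)
    moreover have "\<And>z. Rp d (m-d) z 1 = z (d+1)"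
    proof -
      have "1 \<le> m - d" using assms by simp
      thus "\<And>z. Rp d (m-d) z 1 = z (d+1)" by (simp add: Rp_def)
    qed
    ultimately show ?thesis unfolding m by auto
  qed
  have "card {z \<in> wk m u u. z 1 = b \<and> z d = y \<and> z (d+1) = y'} =
     card {x \<in> wk d u y. x 1 = b} * card {x \<in> wk (m-d) y u. x 1 = y'}"
    unfolding S by (rule split_card)
  also have "\<dots> = W 1 u b * W (d-1) b y * (W 1 y y' * W (m-d-1) y' u)"
  proof -
    obtain d' where d': "d = Suc d'" using assms by (cases d) auto
    obtain e' where e': "m - d = Suc e'" using assms by (cases "m-d") auto
    have "card {x \<in> wk d u y. x 1 = b} = W 1 u b * W (d-1) b y"
      unfolding d' using first_step by simp
    moreover have "card {x \<in> wk (m-d) y u. x 1 = y'} = W 1 y y' * W (m-d-1) y' u"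
      unfolding e' using first_step by simp
    ultimately show ?thesis by simp
  qed
  finally show ?thesis .
qed

lemma col_count:
  fixes c :: "'a set \<Rightarrow> 'c"
  assumes "1 \<le> d" "d+1 < m"
  shows "card {x \<in> cycle_homs m V E. c {x 0, x 1} = c {x d, x (d+1)}} =
    (\<Sum>u\<in>V. \<Sum>b\<in>V. \<Sum>y\<in>V. \<Sum>y'\<in>V. if c {u,b} = c {y,y'} then
        W 1 u b * W (d-1) b y * (W 1 y y' * W (m-d-1) y' u) else 0)"
proof -
  have "card {x \<in> cycle_homs m V E. c {x 0, x 1} = c {x d, x (d+1)}} =
     (\<Sum>u\<in>V. card {z \<in> wk m u u. c {restrict z {0..<m} 0, restrict z {0..<m} 1} =
          c {restrict z {0..<m} d, restrict z {0..<m} (d+1)}})"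
    by (rule cyc_card) (use assms in simp)
  also have "\<dots> = (\<Sum>u\<in>V. \<Sum>b\<in>V. \<Sum>y\<in>V. \<Sum>y'\<in>V. if c {u,b} = c {y,y'} then
        W 1 u b * W (d-1) b y * (W 1 y y' * W (m-d-1) y' u) else 0)"
  proof (rule sum.cong[OF refl])
    fix u
    let ?S = "{z \<in> wk m u u. c {z 0, z 1} = c {z d, z (d+1)}}"
    have eq: "{z \<in> wk m u u. c {restrict z {0..<m} 0, restrict z {0..<m} 1} =
          c {restrict z {0..<m} d, restrict z {0..<m} (d+1)}} = ?S"
      using assms by auto
    have "card ?S = (\<Sum>t\<in>V \<times> V \<times> V. card {z \<in> ?S. (z 1, z d, z (d+1)) = t})"
    proof (rule card_fibres)
      show "finite ?S" by (rule fin_wk)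
      show "finite (V \<times> V \<times> V)" using finV by simp
      show "(\<lambda>z. (z 1, z d, z (d+1))) ` ?S \<subseteq> V \<times> V \<times> V"
        using assms by (auto simp: wk_def walkset_def PiE_iff)
    qed
    also have "\<dots> = (\<Sum>(b,y,y')\<in>V \<times> V \<times> V. if c {u,b} = c {y,y'} then
        W 1 u b * W (d-1) b y * (W 1 y y' * W (m-d-1) y' u) else 0)"
    proof (rule sum.cong[OF refl], clarify)
      fix b y y'
      show "card {z \<in> ?S. (z 1, z d, z (d+1)) = (b,y,y')} = (if c {u,b} = c {y,y'} then
        W 1 u b * W (d-1) b y * (W 1 y y' * W (m-d-1) y' u) else 0)"
      proof (cases "c {u,b} = c {y,y'}")
        case True
        hence "{z \<in> ?S. (z 1, z d, z (d+1)) = (b,y,y')} =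
            {z \<in> wk m u u. z 1 = b \<and> z d = y \<and> z (d+1) = y'}" by (auto simp: wk_def)
        thus ?thesis using True col_count4[OF assms] by simp
      next
        case False
        have e: "{z \<in> ?S. (z 1, z d, z (d+1)) = (b,y,y')} = {}" using False by (auto simp: wk_def)
        show ?thesis unfolding e using False by simp
      qed
    qed
    also have "\<dots> = (\<Sum>b\<in>V. \<Sum>y\<in>V. \<Sum>y'\<in>V. if c {u,b} = c {y,y'} then
        W 1 u b * W (d-1) b y * (W 1 y y' * W (m-d-1) y' u) else 0)"
      by (simp add: sum.cartesian_product)
    finally show "card {z \<in> wk m u u. c {restrict z {0..<m} 0, restrict z {0..<m} 1} =
          c {restrict z {0..<m} d, restrict z {0..<m} (d+1)}} = (\<Sum>b\<in>V. \<Sum>y\<in>V. \<Sum>y'\<in>V. if c {u,b} = c {y,y'} then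
        W 1 u b * W (d-1) b y * (W 1 y y' * W (m-d-1) y' u) else 0)" using eq by simp
  qed
  finally show ?thesis .
qed

end

lemma TT_nn:
  assumes "\<And>k x y. e k x y \<ge> 0" "\<And>a x y. Wf a x y \<ge> 0"
  shows "TT V Wf K e a b \<ge> 0"
  unfolding TT_def using assms by (intro sum_nonneg mult_nonneg_nonneg) auto

context sg
begin

lemma finE: "finite E"
proof -
  have "E \<subseteq> Pow V" using edge_sub by auto
  thus ?thesis using finV by (simp add: finite_subset)
qed

definition Wr :: "nat \<Rightarrow> 'a \<Rightarrow> 'a \<Rightarrow> real" where "Wr a u v = real (W a u v)"

lemma Wr_add: "Wr (a+b) x y = (\<Sum>w\<in>V. Wr a x w * Wr b w y)"
  unfolding Wr_def W_add by simp
lemma Wr_sym: "Wr a x y = Wr a y x" unfolding Wr_def using W_sym by simp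
lemma Wr_nn: "Wr a x y \<ge> 0" by (simp add: Wr_def)
lemma Wr0: "\<beta> \<in> V \<Longrightarrow> Wr 0 \<beta> y = (if \<beta> = y then 1 else 0)" by (simp add: Wr_def W0)

definition ev :: "'a \<Rightarrow> 'a \<Rightarrow> 'a \<Rightarrow> real" where "ev k x y = (if x = k \<and> y = k then 1 else 0)"

lemma ev_sym: "ev k x y = ev k y x" by (auto simp: ev_def)
lemma ev_nn: "ev k x y \<ge> 0" by (simp add: ev_def)

lemma TV_eq: "TT V Wr V ev a b = (\<Sum>u\<in>V. Wr a u u * Wr b u u)"
proof -
  have *: "(\<Sum>u\<in>V. \<Sum>\<beta>\<in>V. \<Sum>y\<in>V. \<Sum>y'\<in>V. ev k u \<beta> * ev k y y' * (Wr a \<beta> y * Wr b y' u)) = Wr a k k * Wr b k k"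
    if "k \<in> V" for k
  proof -
    have "(\<Sum>u\<in>V. \<Sum>\<beta>\<in>V. \<Sum>y\<in>V. \<Sum>y'\<in>V. ev k u \<beta> * ev k y y' * (Wr a \<beta> y * Wr b y' u)) =
      (\<Sum>u\<in>V. \<Sum>\<beta>\<in>V. \<Sum>y\<in>V. \<Sum>y'\<in>V. if y' = k then (if y = k then (if \<beta> = k then
          (if u = k then Wr a k k * Wr b k k else 0) else 0) else 0) else 0)"
      by (intro sum.cong refl) (simp add: ev_def)
    also have "\<dots> = Wr a k k * Wr b k k" using that finV by (simp add: sum.delta)
    finally show ?thesis .
  qed
  show ?thesis unfolding TT_def by (rule sum.cong[OF refl]) (rule *)
qed

lemma deg_sum: assumes "u \<in> V" shows "real (degree E u) = (\<Sum>\<beta>\<in>V. if {u,\<beta>} \<in> E then 1 else 0)"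
proof -
  have "W 2 u u = W (1+1) u u" by (simp add: numeral_2_eq_2)
  also have "\<dots> = (\<Sum>w\<in>V. W 1 u w * W 1 w u)" by (rule W_add)
  also have "\<dots> = (\<Sum>w\<in>V. if {u,w} \<in> E then 1 else 0)"
  proof (rule sum.cong[OF refl])
    fix w assume w: "w \<in> V"
    show "W 1 u w * W 1 w u = (if {u,w} \<in> E then 1 else 0)"
      using W1[OF assms w] W1[OF w assms] by (simp add: insert_commute)
  qed
  finally have "degree E u = (\<Sum>w\<in>V. if {u,w} \<in> E then 1 else 0)" using W2[OF assms] by simp
  hence "real (degree E u) = real (\<Sum>w\<in>V. if {u,w} \<in> E then 1 else 0)" by simp
  also have "\<dots> = (\<Sum>\<beta>\<in>V. if {u,\<beta>} \<in> E then 1 else 0)" unfolding of_nat_sum by (intro sum.cong refl) simp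
  finally show ?thesis .
qed

lemma TV_bound: "TT V Wr V ev 2 b = (\<Sum>u\<in>V. real (degree E u) * Wr b u u)"
  unfolding TV_eq by (intro sum.cong refl) (simp add: Wr_def W2)

definition Mv :: "nat \<Rightarrow> real" where "Mv j = (\<Sum>u\<in>V. Wr (2*j) u u)"

lemma Mv_TT: "Mv j = TT V Wr V ev (2*j) 0"
  unfolding TV_eq Mv_def by (intro sum.cong refl) (simp add: Wr0)

lemma Mv_nn: "Mv j \<ge> 0" unfolding Mv_def by (intro sum_nonneg) (simp add: Wr_nn)

lemma Mv0: "Mv 0 = real (card V)"
  unfolding Mv_def by (simp add: Wr0)

lemma Mv_lc: "(Mv (Suc j))\<^sup>2 \<le> Mv j * Mv (Suc (Suc j))"
proof -
  have "(TT V Wr V ev (j + (j+2)) (0+0))\<^sup>2 \<le> TT V Wr V ev (2*j) (2*0) * TT V Wr V ev (2*(j+2)) (2*0)"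
    by (rule TT_cs) (auto simp: ev_sym Wr_sym Wr_add)
  moreover have a: "j + (j+2) = 2 * Suc j" and c: "2*(j+2) = 2 * Suc (Suc j)" by simp_all
  moreover have b: "(0::nat) + 0 = 0" "2*(0::nat) = 0" by simp_all
  ultimately show ?thesis unfolding a b c Mv_TT[symmetric] by simp
qed

lemma Mv_interp: "Mv j ^ (j+1) \<le> real (card V) * Mv (j+1) ^ j"
  by (rule logconv_induct) (auto simp: Mv_nn Mv0 Mv_lc)

lemma hom_Mv: assumes "m = 2*k" "k \<ge> 1" shows "real (card (cycle_homs m V E)) = Mv k"
proof -
  have "card (cycle_homs m V E) = card {x \<in> cycle_homs m V E. True}" by simp
  also have "\<dots> = (\<Sum>u\<in>V. card {z \<in> wk m u u. True})" by (rule cyc_card) (use assms in simp)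
  finally show ?thesis using assms by (simp add: Mv_def Wr_def W_def of_nat_sum)
qed

end

locale sgc = sg +
  fixes c :: "'a set \<Rightarrow> 'c"
  assumes proper: "proper_edge_colouring E c"
begin

definition ec :: "'c \<Rightarrow> 'a \<Rightarrow> 'a \<Rightarrow> real" where
  "ec k x y = (if {x,y} \<in> E \<and> c {x,y} = k then 1 else 0)"

lemma ec_sym: "ec k x y = ec k y x" by (simp add: ec_def insert_commute)
lemma ec_nn: "ec k x y \<ge> 0" by (simp add: ec_def)
lemma ec_idem: "ec k x y * ec k x y = ec k x y" by (simp add: ec_def)

lemma same_col: assumes "{u,\<beta>} \<in> E" "{\<beta>,y} \<in> E" "c {u,\<beta>} = c {\<beta>,y}" shows "y = u"
proof -
  have "{u,\<beta>} = {\<beta>,y}"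
  proof (rule ccontr)
    assume ne: "{u,\<beta>} \<noteq> {\<beta>,y}"
    have "{u,\<beta>} \<inter> {\<beta>,y} \<noteq> {}" by auto
    hence "c {u,\<beta>} \<noteq> c {\<beta>,y}"
      using proper assms(1,2) ne unfolding proper_edge_colouring_def by simp
    thus False using assms(3) by simp
  qed
  thus ?thesis using edge_ne[OF assms(1)] by (auto simp: doubleton_eq_iff)
qed

lemma sum_ec: "(\<Sum>k\<in>c ` E. ec k u \<beta> * ec k y y') =
   (if {u,\<beta>} \<in> E \<and> {y,y'} \<in> E \<and> c {u,\<beta>} = c {y,y'} then 1 else 0)"
proof (cases "{u,\<beta>} \<in> E \<and> {y,y'} \<in> E \<and> c {u,\<beta>} = c {y,y'}")
  case True
  have "(\<Sum>k\<in>c ` E. ec k u \<beta> * ec k y y') = (\<Sum>k\<in>c ` E. if k = c {u,\<beta>} then 1 else 0)"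
    using True by (intro sum.cong refl) (auto simp: ec_def)
  also have "\<dots> = 1" using True finE by simp
  finally show ?thesis using True by simp
next
  case False
  have "(\<Sum>k\<in>c ` E. ec k u \<beta> * ec k y y') = (\<Sum>k\<in>c ` E. 0)"
    using False by (intro sum.cong refl) (auto simp: ec_def)
  thus ?thesis using False by simp
qed

lemma col_TT: assumes "1 \<le> d" "d+1 < m"
  shows "real (card {x \<in> cycle_homs m V E. c {x 0, x 1} = c {x d, x (d+1)}}) =
     TT V Wr (c ` E) ec (d-1) (m-d-1)"
proof -
  have leaf: "(\<Sum>k\<in>c ` E. ec k u \<beta> * ec k y y' * (Wr (d-1) \<beta> y * Wr (m-d-1) y' u)) =
     real (if c {u,\<beta>} = c {y,y'} then W 1 u \<beta> * W (d-1) \<beta> y * (W 1 y y' * W (m-d-1) y' u) else 0)"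
    if "u \<in> V" "\<beta> \<in> V" "y \<in> V" "y' \<in> V" for u \<beta> y y'
  proof -
    have "(\<Sum>k\<in>c ` E. ec k u \<beta> * ec k y y' * (Wr (d-1) \<beta> y * Wr (m-d-1) y' u)) =
       (\<Sum>k\<in>c ` E. ec k u \<beta> * ec k y y') * (Wr (d-1) \<beta> y * Wr (m-d-1) y' u)"
      by (simp add: sum_distrib_right)
    also have "\<dots> = real (if c {u,\<beta>} = c {y,y'} then W 1 u \<beta> * W (d-1) \<beta> y * (W 1 y y' * W (m-d-1) y' u) else 0)"
      unfolding sum_ec using W1[OF that(1,2)] W1[OF that(3,4)] by (simp add: Wr_def)
    finally show ?thesis .
  qed
  have "TT V Wr (c ` E) ec (d-1) (m-d-1) = (\<Sum>u\<in>V. \<Sum>\<beta>\<in>V. \<Sum>y\<in>V. \<Sum>y'\<in>V. \<Sum>k\<in>c ` E.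
      ec k u \<beta> * ec k y y' * (Wr (d-1) \<beta> y * Wr (m-d-1) y' u))"
    unfolding TT_def by (rule mv4)
  also have "\<dots> = (\<Sum>u\<in>V. \<Sum>\<beta>\<in>V. \<Sum>y\<in>V. \<Sum>y'\<in>V.
     real (if c {u,\<beta>} = c {y,y'} then W 1 u \<beta> * W (d-1) \<beta> y * (W 1 y y' * W (m-d-1) y' u) else 0))"
    by ((rule sum.cong[OF refl])+, rule leaf, assumption+)
  also have "\<dots> = real (card {x \<in> cycle_homs m V E. c {x 0, x 1} = c {x d, x (d+1)}})"
    unfolding col_count[OF assms] of_nat_sum ..
  finally show ?thesis by simp
qed

lemma col_bound: "TT V Wr (c ` E) ec 0 b = (\<Sum>u\<in>V. real (degree E u) * Wr b u u)"
proof -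
  have s1: "(\<Sum>y\<in>V. \<Sum>y'\<in>V. ec k u \<beta> * ec k y y' * (Wr 0 \<beta> y * Wr b y' u)) =
     (\<Sum>y'\<in>V. ec k u \<beta> * ec k \<beta> y' * Wr b y' u)" if "\<beta> \<in> V" for k u \<beta>
  proof -
    have "(\<Sum>y\<in>V. \<Sum>y'\<in>V. ec k u \<beta> * ec k y y' * (Wr 0 \<beta> y * Wr b y' u)) =
      (\<Sum>y\<in>V. if \<beta> = y then (\<Sum>y'\<in>V. ec k u \<beta> * ec k \<beta> y' * Wr b y' u) else 0)"
      using that by (intro sum.cong refl) (auto simp: Wr0)
    also have "\<dots> = (\<Sum>y'\<in>V. ec k u \<beta> * ec k \<beta> y' * Wr b y' u)" using that finV by simp
    finally show ?thesis .
  qed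
  have s2: "(\<Sum>y'\<in>V. ec k u \<beta> * ec k \<beta> y' * Wr b y' u) = ec k u \<beta> * Wr b u u" if "u \<in> V" for k u \<beta>
  proof -
    have "(\<Sum>y'\<in>V. ec k u \<beta> * ec k \<beta> y' * Wr b y' u) = (\<Sum>y'\<in>V. if y' = u then ec k u \<beta> * Wr b u u else 0)"
    proof (rule sum.cong[OF refl])
      fix y' assume "y' \<in> V"
      show "ec k u \<beta> * ec k \<beta> y' * Wr b y' u = (if y' = u then ec k u \<beta> * Wr b u u else 0)"
      proof (cases "y' = u")
        case True thus ?thesis using ec_idem[of k u \<beta>] ec_sym[of k \<beta> u] by simp
      next
        case False
        hence "ec k u \<beta> * ec k \<beta> y' = 0" using same_col by (auto simp: ec_def)
        thus ?thesis using False by simp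
      qed
    qed
    also have "\<dots> = ec k u \<beta> * Wr b u u" using that finV by (simp add: sum.delta)
    finally show ?thesis .
  qed
  have "TT V Wr (c ` E) ec 0 b = (\<Sum>k\<in>c ` E. \<Sum>u\<in>V. \<Sum>\<beta>\<in>V. ec k u \<beta> * Wr b u u)"
    unfolding TT_def by (intro sum.cong refl) (simp add: s1 s2)
  also have "\<dots> = (\<Sum>u\<in>V. \<Sum>\<beta>\<in>V. \<Sum>k\<in>c ` E. ec k u \<beta> * Wr b u u)" by (rule mv2)
  also have "\<dots> = (\<Sum>u\<in>V. \<Sum>\<beta>\<in>V. (if {u,\<beta>} \<in> E then 1 else 0) * Wr b u u)"
  proof (intro sum.cong refl)
    fix u \<beta>
    have "(\<Sum>k\<in>c ` E. ec k u \<beta> * Wr b u u) = (\<Sum>k\<in>c ` E. ec k u \<beta> * ec k u \<beta>) * Wr b u u"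
      by (simp add: sum_distrib_right ec_idem)
    thus "(\<Sum>k\<in>c ` E. ec k u \<beta> * Wr b u u) = (if {u,\<beta>} \<in> E then 1 else 0) * Wr b u u"
      unfolding sum_ec by simp
  qed
  also have "\<dots> = (\<Sum>u\<in>V. real (degree E u) * Wr b u u)"
    by (intro sum.cong refl) (simp add: deg_sum sum_distrib_right)
  finally show ?thesis .
qed

end

context sg
begin

definition rot :: "nat \<Rightarrow> nat \<Rightarrow> (nat \<Rightarrow> 'a) \<Rightarrow> (nat \<Rightarrow> 'a)" where
  "rot m i x = restrict (\<lambda>t. x ((t+i) mod m)) {0..<m}"

lemma rot_val: "t < m \<Longrightarrow> rot m i x t = x ((t+i) mod m)" by (simp add: rot_def)

lemma fin_cyc: "finite (cycle_homs m V E)"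
proof -
  have "finite ({0..<m} \<rightarrow>\<^sub>E V)" using finV by (simp add: finite_PiE)
  thus ?thesis unfolding cycle_homs_def by simp
qed

lemma rot_cyc: assumes "x \<in> cycle_homs m V E" "0 < m" shows "rot m i x \<in> cycle_homs m V E"
proof -
  have x: "x \<in> {0..<m} \<rightarrow>\<^sub>E V" "\<forall>t<m. {x t, x ((t + 1) mod m)} \<in> E"
    using assms by (auto simp: cycle_homs_def)
  have "rot m i x \<in> {0..<m} \<rightarrow>\<^sub>E V" using x assms by (auto simp: rot_def PiE_iff)
  moreover have "{rot m i x t, rot m i x ((t + 1) mod m)} \<in> E" if "t < m" for t
  proof -
    have "((t + 1) mod m + i) mod m = ((t+i) mod m + 1) mod m"
    proof -
      have "((t + 1) mod m + i) mod m = (t + 1 + i) mod m" by (rule mod_add_left_eq)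
      moreover have "((t+i) mod m + 1) mod m = (t + i + 1) mod m" by (rule mod_add_left_eq)
      moreover have "t + 1 + i = t + i + 1" by simp
      ultimately show ?thesis by simp
    qed
    hence "{rot m i x t, rot m i x ((t + 1) mod m)} = {x ((t+i) mod m), x (((t+i) mod m + 1) mod m)}"
      using that assms by (simp add: rot_val)
    also have "\<dots> \<in> E" using x(2) assms by simp
    finally show ?thesis .
  qed
  ultimately show ?thesis by (simp add: cycle_homs_def)
qed

lemma rot_inj: assumes "i < m" shows "inj_on (rot m i) (cycle_homs m V E)"
proof (rule inj_onI)
  fix x y assume x: "x \<in> cycle_homs m V E" and y: "y \<in> cycle_homs m V E" and e: "rot m i x = rot m i y"
  have xp: "x \<in> {0..<m} \<rightarrow>\<^sub>E V" and yp: "y \<in> {0..<m} \<rightarrow>\<^sub>E V" using x y by (auto simp: cycle_homs_def)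
  show "x = y"
  proof (rule PiE_ext[OF xp yp])
    fix t assume t: "t \<in> {0..<m}"
    define t' where "t' = (t + (m - i)) mod m"
    have t'm: "t' < m" using assms by (simp add: t'_def)
    have "(t' + i) mod m = (t + (m - i) + i) mod m" by (simp add: t'_def mod_add_left_eq)
    also have "t + (m - i) + i = t + m" using assms by simp
    also have "(t + m) mod m = t" using t by simp
    finally have tt: "(t' + i) mod m = t" .
    have "x t = rot m i x t'" using tt t'm by (simp add: rot_val)
    also have "\<dots> = rot m i y t'" using e by simp
    also have "\<dots> = y t" using tt t'm by (simp add: rot_val)
    finally show "x t = y t" .
  qed
qed

lemma rot_card: assumes "i < m" "\<And>x. x \<in> cycle_homs m V E \<Longrightarrow> P x \<Longrightarrow> Q (rot m i x)"
  shows "card {x \<in> cycle_homs m V E. P x} \<le> card {y \<in> cycle_homs m V E. Q y}"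
proof (rule card_inj_on_le)
  show "inj_on (rot m i) {x \<in> cycle_homs m V E. P x}"
    using rot_inj[OF assms(1)] by (rule inj_on_subset) auto
  show "rot m i ` {x \<in> cycle_homs m V E. P x} \<subseteq> {y \<in> cycle_homs m V E. Q y}"
    using assms rot_cyc by auto
  show "finite {y \<in> cycle_homs m V E. Q y}" using fin_cyc by simp
qed

lemma VC_rot: assumes "i < j" "j < m"
  shows "card {x \<in> cycle_homs m V E. x i = x j} \<le> card {y \<in> cycle_homs m V E. y 0 = y (j-i)}"
proof (rule rot_card)
  show "i < m" using assms by simp
  fix x :: "nat \<Rightarrow> 'a" assume "x i = x j"
  moreover have "rot m i x 0 = x i" using assms by (simp add: rot_val)
  moreover have "rot m i x (j-i) = x j" using assms by (simp add: rot_val)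
  ultimately show "rot m i x 0 = rot m i x (j-i)" by simp
qed

end

context sgc
begin

lemma CC_rot: assumes "i < j" "j - i + 1 < m" "j < m"
  shows "card {x \<in> cycle_homs m V E. c {x i, x ((i+1) mod m)} = c {x j, x ((j+1) mod m)}}
     \<le> card {y \<in> cycle_homs m V E. c {y 0, y 1} = c {y (j-i), y (j-i+1)}}"
proof (rule rot_card)
  show "i < m" using assms by simp
  fix x :: "nat \<Rightarrow> 'a" assume "c {x i, x ((i+1) mod m)} = c {x j, x ((j+1) mod m)}"
  moreover have "rot m i x 0 = x i" using assms by (simp add: rot_val)
  moreover have "rot m i x 1 = x ((i+1) mod m)" using assms by (simp add: rot_val add.commute)
  moreover have "rot m i x (j-i) = x j" using assms by (simp add: rot_val)
  moreover have "rot m i x (j-i+1) = x ((j+1) mod m)" using assms by (simp add: rot_val)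
  ultimately show "c {rot m i x 0, rot m i x 1} = c {rot m i x (j-i), rot m i x (j-i+1)}" by simp
qed

lemma cover:
  assumes m4: "m \<ge> 4" and x: "x \<in> cycle_homs m V E"
    and nr: "\<not> (inj_on x {0..<m} \<and> inj_on (\<lambda>i. c {x i, x ((i+1) mod m)}) {0..<m})"
  shows "\<exists>i j. i < j \<and> j < m \<and> i + 2 \<le> j \<and> j + 2 \<le> i + m \<and>
     (x i = x j \<or> c {x i, x ((i+1) mod m)} = c {x j, x ((j+1) mod m)})"
proof -
  have xe: "\<forall>t<m. {x t, x ((t + 1) mod m)} \<in> E" using x by (auto simp: cycle_homs_def)
  have last: "(m - 1 + 1) mod m = 0" using m4 by simp
  show ?thesis
  proof (cases "inj_on x {0..<m}")
    case False
    then obtain i j where ij: "i < m" "j < m" "i \<noteq> j" "x i = x j" by (auto simp: inj_on_def)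
    have gen: "\<exists>i j. i < j \<and> j < m \<and> i + 2 \<le> j \<and> j + 2 \<le> i + m \<and> x i = x j"
      if "a < b" "b < m" "x a = x b" for a b
    proof -
      have "b \<noteq> a + 1"
      proof
        assume b: "b = a + 1"
        have "{x a, x b} \<in> E" using xe[rule_format, of a] b that(2) by simp
        thus False using edge_ne[of "x a" "x b"] that(3) by simp
      qed
      moreover have "\<not> (a = 0 \<and> b = m - 1)"
      proof
        assume "a = 0 \<and> b = m - 1"
        hence "{x b, x a} \<in> E" using xe[rule_format, of "m-1"] last m4 by auto
        thus False using edge_ne[of "x b" "x a"] that(3) by simp
      qed
      ultimately show ?thesis using that by (intro exI[of _ a] exI[of _ b]) auto
    qed
    show ?thesis
    proof (cases "i < j")
      case True thus ?thesis using gen[of i j] ij by blast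
    next
      case False hence "j < i" using ij by simp
      thus ?thesis using gen[of j i] ij by (metis)
    qed
  next
    case True
    hence inj: "inj_on x {0..<m}" .
    let ?col = "\<lambda>i. c {x i, x ((i+1) mod m)}"
    have "\<not> inj_on ?col {0..<m}" using nr True by simp
    then obtain i j where ij: "i < m" "j < m" "i \<noteq> j" "?col i = ?col j" by (auto simp: inj_on_def)
    have gen: "\<exists>i j. i < j \<and> j < m \<and> i + 2 \<le> j \<and> j + 2 \<le> i + m \<and> ?col i = ?col j"
      if "a < b" "b < m" "?col a = ?col b" for a b
    proof -
      have "b \<noteq> a + 1"
      proof
        assume b: "b = a + 1"
        have e1: "{x a, x b} \<in> E" using xe[rule_format, of a] that(2) b by simp
        have e2: "{x b, x ((b+1) mod m)} \<in> E" using xe that by auto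
        have cc: "c {x a, x b} = c {x b, x ((b+1) mod m)}" using that b by simp
        have "x ((b+1) mod m) = x a" using same_col[OF e1 e2 cc] .
        hence "(b+1) mod m = a" using inj that by (auto simp: inj_on_def)
        moreover have "(b+1) mod m \<noteq> a"
        proof (cases "b + 1 < m")
          case True thus ?thesis using b by simp
        next
          case False hence "b + 1 = m" using that by simp
          thus ?thesis using b m4 by simp
        qed
        ultimately show False by simp
      qed
      moreover have "\<not> (a = 0 \<and> b = m - 1)"
      proof
        assume ab: "a = 0 \<and> b = m - 1"
        have e1: "{x b, x 0} \<in> E" using xe[rule_format, of "m-1"] last m4 ab by auto
        have e2: "{x 0, x 1} \<in> E" using xe[rule_format, of 0] m4 by auto
        have "c {x 0, x 1} = c {x b, x 0}" using that ab last m4 by simp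
        hence cc: "c {x b, x 0} = c {x 0, x 1}" by simp
        have "x 1 = x b" using same_col[OF e1 e2 cc] .
        hence "1 = b" using inj that m4 by (auto simp: inj_on_def)
        thus False using ab m4 by simp
      qed
      ultimately show ?thesis using that by (intro exI[of _ a] exI[of _ b]) auto
    qed
    show ?thesis
    proof (cases "i < j")
      case True thus ?thesis using gen[of i j] ij by blast
    next
      case False hence "j < i" using ij by simp
      thus ?thesis using gen[of j i] ij by (metis)
    qed
  qed
qed

end

context sgc
begin

lemma main:
  assumes k2: "k \<ge> 2"
    and hyp: "real (hom_cycle (2 * k) V E) >
           64 ^ (2 * k) * real k ^ (3 * k) * real (card V) * real (max_degree V E) ^ k"
  shows "has_rainbow_cycle V E c (2 * k)"
proof -
  define m where "m = 2*k"
  define D where "D = real (max_degree V E)"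
  define Q where "Q = D * Mv (k-1)"
  define L where "L = 4096 * real k ^ 3"
  let ?cyc = "cycle_homs m V E"
  have m4: "m \<ge> 4" using k2 by (simp add: m_def)
  have H: "real (card ?cyc) = Mv k" by (rule hom_Mv) (use k2 m_def in auto)
  have deg_le: "real (degree E u) \<le> D" if "u \<in> V" for u
  proof -
    have "degree E u \<le> max_degree V E" unfolding max_degree_def
      using that finV by (intro Max_ge) auto
    thus ?thesis by (simp add: D_def)
  qed
  have D0: "D \<ge> 0" by (simp add: D_def)
  have bnd: "(\<Sum>u\<in>V. real (degree E u) * Wr (2*(k-1)) u u) \<le> Q"
  proof -
    have "(\<Sum>u\<in>V. real (degree E u) * Wr (2*(k-1)) u u) \<le> (\<Sum>u\<in>V. D * Wr (2*(k-1)) u u)"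
      by (intro sum_mono mult_right_mono deg_le) (auto simp: Wr_nn)
    also have "\<dots> = Q" by (simp add: Q_def Mv_def sum_distrib_left)
    finally show ?thesis .
  qed
  have L0: "L > 0" using k2 by (simp add: L_def)
  have hyp2: "Mv k > L ^ k * real (card V) * D ^ k"
  proof -
    have "(64::real) ^ (2 * k) * real k ^ (3 * k) = L ^ k"
      by (simp add: L_def power_mult_distrib power_mult)
    thus ?thesis using hyp H by (simp add: hom_cycle_def m_def D_def)
  qed
  have Mk0: "Mv k > 0"
  proof -
    have "L ^ k * real (card V) * D ^ k \<ge> 0" using L0 D0 by simp
    thus ?thesis using hyp2 by linarith
  qed
  have LQ: "L * Q \<le> Mv k"
  proof -
    have h1: "Mv (k-1) ^ k \<le> real (card V) * Mv k ^ (k-1)"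
      using Mv_interp[of "k-1"] k2 by simp
    have "L * D * Mv (k-1) \<le> Mv k"
      by (rule final_numeric[OF _ L0 D0 Mv_nn Mv_nn _ h1 hyp2]) (use k2 in auto)
    thus ?thesis by (simp add: Q_def mult_ac)
  qed
  have Q0: "Q \<ge> 0" using D0 Mv_nn by (simp add: Q_def)
  have cs_ev: "(TT V Wr V ev (a1+a2) (b1+b2))\<^sup>2 \<le> TT V Wr V ev (2*a1) (2*b2) * TT V Wr V ev (2*a2) (2*b1)"
    for a1 a2 b1 b2 by (rule TT_cs) (auto simp: ev_sym Wr_sym Wr_add)
  have cs_ec: "(TT V Wr (c ` E) ec (a1+a2) (b1+b2))\<^sup>2 \<le> TT V Wr (c ` E) ec (2*a1) (2*b2) * TT V Wr (c ` E) ec (2*a2) (2*b1)"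
    for a1 a2 b1 b2 by (rule TT_cs) (auto simp: ec_sym Wr_sym Wr_add)
  have VB: "real (card {x \<in> ?cyc. x 0 = x d}) \<le> Q" if "2 \<le> d" "d \<le> m - 2" for d
  proof -
    have "real (card {x \<in> ?cyc. x 0 = x d}) = TT V Wr V ev d (2*k - d)"
      using that m4 by (simp add: vert_count TV_eq Wr_def m_def of_nat_sum)
    also have "\<dots> \<le> TT V Wr V ev (2*1) (2*k - 2*1)"
      by (rule max_arg) (use that k2 cs_ev TT_sym[OF ev_sym Wr_sym] in
          \<open>auto simp: m_def intro: TT_nn ev_nn Wr_nn\<close>)
    also have "\<dots> = (\<Sum>u\<in>V. real (degree E u) * Wr (2*(k-1)) u u)"
      using TV_bound[of "2*(k-1)"] by (simp add: right_diff_distrib')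
    finally show ?thesis using bnd by simp
  qed
  have CB: "real (card {x \<in> ?cyc. c {x 0, x 1} = c {x d, x (d+1)}}) \<le> Q" if "2 \<le> d" "d \<le> m - 2" for d
  proof -
    have "real (card {x \<in> ?cyc. c {x 0, x 1} = c {x d, x (d+1)}}) = TT V Wr (c ` E) ec (d-1) (m-d-1)"
      by (rule col_TT) (use that m4 in auto)
    also have "m - d - 1 = 2*(k-1) - (d-1)" using that k2 by (simp add: m_def)
    also have "TT V Wr (c ` E) ec (d-1) (2*(k-1) - (d-1)) \<le> TT V Wr (c ` E) ec (2*0) (2*(k-1) - 2*0)"
      by (rule max_arg) (use that k2 cs_ec TT_sym[OF ec_sym Wr_sym] in
          \<open>auto simp: m_def intro: TT_nn ec_nn Wr_nn\<close>)
    also have "\<dots> = (\<Sum>u\<in>V. real (degree E u) * Wr (2*(k-1)) u u)"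
      using col_bound by simp
    finally show ?thesis using bnd by simp
  qed
  define J where "J i = {j. i + 2 \<le> j \<and> j < m \<and> j + 2 \<le> i + m}" for i
  define A where "A i j = {x \<in> ?cyc. x i = x j} \<union>
     {x \<in> ?cyc. c {x i, x ((i+1) mod m)} = c {x j, x ((j+1) mod m)}}" for i j
  define Dg where "Dg = {x \<in> ?cyc. \<not> (inj_on x {0..<m} \<and> inj_on (\<lambda>i. c {x i, x ((i+1) mod m)}) {0..<m})}"
  have finJ: "finite (J i)" for i unfolding J_def by (rule finite_subset[of _ "{0..<m}"]) auto
  have cardJ: "card (J i) \<le> m" for i
  proof -
    have "card (J i) \<le> card {0..<m}" unfolding J_def by (rule card_mono) auto
    thus ?thesis by simp
  qed
  have A_bound: "real (card (A i j)) \<le> 2 * Q" if "i < m" "j \<in> J i" for i j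
  proof -
    have ij: "i < j" "j < m" "2 \<le> j - i" "j - i \<le> m - 2" using that by (auto simp: J_def)
    have "card (A i j) \<le> card {x \<in> ?cyc. x i = x j} +
        card {x \<in> ?cyc. c {x i, x ((i+1) mod m)} = c {x j, x ((j+1) mod m)}}"
      unfolding A_def by (rule card_Un_le)
    also have "\<dots> \<le> card {y \<in> ?cyc. y 0 = y (j-i)} + card {y \<in> ?cyc. c {y 0, y 1} = c {y (j-i), y (j-i+1)}}"
      by (intro add_mono VC_rot CC_rot) (use ij in auto)
    finally have "real (card (A i j)) \<le> real (card {y \<in> ?cyc. y 0 = y (j-i)}) +
        real (card {y \<in> ?cyc. c {y 0, y 1} = c {y (j-i), y (j-i+1)}})" by linarith
    also have "\<dots> \<le> Q + Q" using VB[OF ij(3,4)] CB[OF ij(3,4)] by linarith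
    finally show ?thesis by simp
  qed
  have cov: "Dg \<subseteq> (\<Union>i\<in>{0..<m}. \<Union>j\<in>J i. A i j)"
  proof
    fix x assume "x \<in> Dg"
    hence x: "x \<in> ?cyc" "\<not> (inj_on x {0..<m} \<and> inj_on (\<lambda>i. c {x i, x ((i+1) mod m)}) {0..<m})"
      by (auto simp: Dg_def)
    from cover[OF m4 x] obtain i j where "i < j" "j < m" "i + 2 \<le> j" "j + 2 \<le> i + m"
      "x i = x j \<or> c {x i, x ((i+1) mod m)} = c {x j, x ((j+1) mod m)}" by blast
    thus "x \<in> (\<Union>i\<in>{0..<m}. \<Union>j\<in>J i. A i j)"
      using x(1) by (auto simp: J_def A_def)
  qed
  have "real (card Dg) \<le> real (card (\<Union>i\<in>{0..<m}. \<Union>j\<in>J i. A i j))"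
    using cov by (simp add: card_mono finite_UN_I finJ A_def fin_cyc)
  also have "card (\<Union>i\<in>{0..<m}. \<Union>j\<in>J i. A i j) \<le> (\<Sum>i\<in>{0..<m}. card (\<Union>j\<in>J i. A i j))"
    by (rule card_UN_le) simp
  also have "\<dots> \<le> (\<Sum>i\<in>{0..<m}. \<Sum>j\<in>J i. card (A i j))"
    by (intro sum_mono card_UN_le finJ)
  finally have "real (card Dg) \<le> (\<Sum>i\<in>{0..<m}. \<Sum>j\<in>J i. real (card (A i j)))"
    by (simp add: of_nat_sum)
  also have "\<dots> \<le> (\<Sum>i\<in>{0..<m}. \<Sum>j\<in>J i. 2 * Q)"
    by (intro sum_mono A_bound) auto
  also have "\<dots> \<le> (\<Sum>i\<in>{0..<m}. real m * (2 * Q))"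
    using cardJ Q0 by (intro sum_mono) (simp add: mult_right_mono)
  also have "\<dots> = real m * real m * 2 * Q" by simp
  also have "\<dots> < Mv k"
  proof -
    have "real m * real m * 2 * Q = 8 * real k ^ 2 * Q" by (simp add: m_def power2_eq_square)
    also have "\<dots> < Mv k"
    proof (cases "Q = 0")
      case True thus ?thesis using Mk0 by simp
    next
      case False
      hence Qp: "Q > 0" using Q0 by simp
      have "8 * real k ^ 2 * Q < 512 * real k * (8 * real k ^ 2 * Q)"
        using k2 Qp by (simp add: mult_less_cancel_right1)
      also have "\<dots> = L * Q" by (simp add: L_def power2_eq_square power3_eq_cube)
      finally show ?thesis using LQ by linarith
    qed
    finally show ?thesis .
  qed
  finally have "card Dg < card ?cyc" using H by simp
  then obtain x where x: "x \<in> ?cyc" "x \<notin> Dg"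
  proof -
    assume r: "\<And>x. x \<in> ?cyc \<Longrightarrow> x \<notin> Dg \<Longrightarrow> thesis"
    show thesis
    proof (rule ccontr)
      assume "\<not> thesis"
      hence "?cyc \<subseteq> Dg" using r by blast
      hence "card ?cyc \<le> card Dg" using fin_cyc by (intro card_mono) (auto simp: Dg_def)
      thus False using \<open>card Dg < card ?cyc\<close> by simp
    qed
  qed
  have "is_cycle V E m x" using x by (auto simp: is_cycle_def Dg_def cycle_homs_def PiE_iff)
  moreover have "inj_on (\<lambda>i. c {x i, x ((i + 1) mod m)}) {0..<m}" using x by (auto simp: Dg_def)
  ultimately show ?thesis unfolding has_rainbow_cycle_def m_def by blast
qed

end

theorem lemma4p1:
  fixes V :: "'a set" and E :: "'a set set" and c :: "'a set \<Rightarrow> 'c" and k :: nat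
  assumes "k \<ge> 2"
    and "simple_graph V E"
    and "proper_edge_colouring E c"
    and "real (hom_cycle (2 * k) V E) >
           64 ^ (2 * k) * real k ^ (3 * k) * real (card V) * real (max_degree V E) ^ k"
  shows "has_rainbow_cycle V E c (2 * k)"
proof -
  interpret sgc V E c using assms(2,3) by (unfold_locales) auto
  show ?thesis using main assms(1,4) by blast
qed

end
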